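(* Let $\gamma:Z_1\to Z_2$ be a morphism of $F$-analytic manifolds over a non-Archimedean local field $F$, and let $\mu_i$ be nowhere vanishing smooth measures on $Z_i$. Assume that for every real-valued non-negative $f\in C_c^\infty(Z_1)$ we have $\frac{\gamma_*(f\mu_1)}{\mu_2}\in L^{<\infty}(Z_2)$. Then for every $\epsilon>0$ and every real-valued non-negative $g\in L^{1+\epsilon}(Z_2)$ we have $\gamma^*(g)\in L^1_{loc}(Z_1)$.
   Context: $C_c^\infty(Z_1)$: locally constant compactly supported functions. $\frac{\gamma_*(f\mu_1)}{\mu_2}$ is the Radon–Nikodym derivative of the pushforward measure (the hypothesis includes that it is absolutely continuous). $L^{<\infty}(Z_2)=\bigcap_{1\le t<\infty}L^t(Z_2,\mu_2)$; $L^{1+\epsilon}(Z_2)=L^{1+\epsilon}(Z_2,\mu_2)$; $L^1_{loc}(Z_1)$ is w.r.t. $\mu_1$. $\gamma^*(g)=g\circ\gamma$. *)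

theory Defs
  imports "HOL-Analysis.Analysis" "HOL-Probability.Probability"
begin

text \<open>A non-Archimedean local field: a field F with a non-Archimedean absolute value
  which is non-trivial (non-discrete topology) and for which the closed unit ball is
  (sequentially) compact, i.e. F is locally compact.\<close>
definition nonarch_local_field :: "('f::field \<Rightarrow> real) \<Rightarrow> bool" where
  "nonarch_local_field absF \<longleftrightarrow>
     (\<forall>x. 0 \<le> absF x) \<and> (\<forall>x. absF x = 0 \<longleftrightarrow> x = 0) \<and>
     (\<forall>x y. absF (x * y) = absF x * absF y) \<and>
     (\<forall>x y. absF (x + y) \<le> max (absF x) (absF y)) \<and>
     (\<exists>x. absF x \<noteq> 0 \<and> absF x \<noteq> 1) \<and>
     (\<forall>s::nat \<Rightarrow> 'f. (\<forall>k. absF (s k) \<le> 1) \<longrightarrow>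
        (\<exists>r l. strict_mono r \<and> absF l \<le> 1 \<and> (\<lambda>k. absF (s (r k) - l)) \<longlonglongrightarrow> 0))"

text \<open>F^n is represented as the functions nat => F vanishing outside {..<n}.\<close>
definition Fn :: "nat \<Rightarrow> (nat \<Rightarrow> 'f::zero) set" where
  "Fn n = {x. \<forall>i\<ge>n. x i = 0}"

definition normF :: "('f \<Rightarrow> real) \<Rightarrow> nat \<Rightarrow> (nat \<Rightarrow> 'f) \<Rightarrow> real" where
  "normF absF n x = Max (insert 0 ((\<lambda>i. absF (x i)) ` {..<n}))"

definition openF :: "('f::ab_group_add \<Rightarrow> real) \<Rightarrow> nat \<Rightarrow> (nat \<Rightarrow> 'f) set \<Rightarrow> bool" where
  "openF absF n S \<longleftrightarrow> S \<subseteq> Fn n \<and>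
     (\<forall>x\<in>S. \<exists>r>0. {y\<in>Fn n. normF absF n (y - x) < r} \<subseteq> S)"

definition MI :: "nat \<Rightarrow> (nat \<Rightarrow> nat) set" where
  "MI n = {\<alpha>. \<forall>i\<ge>n. \<alpha> i = 0}"

definition monoF :: "nat \<Rightarrow> (nat \<Rightarrow> nat) \<Rightarrow> (nat \<Rightarrow> 'f::comm_ring_1) \<Rightarrow> 'f" where
  "monoF n \<alpha> y = (\<Prod>i<n. y i ^ \<alpha> i)"

definition has_sumF :: "('f::ab_group_add \<Rightarrow> real) \<Rightarrow> ('i \<Rightarrow> 'f) \<Rightarrow> 'i set \<Rightarrow> 'f \<Rightarrow> bool" where
  "has_sumF absF c I s \<longleftrightarrow>
     (\<forall>e>0. \<exists>S0. finite S0 \<and> S0 \<subseteq> I \<and>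
        (\<forall>S. finite S \<and> S0 \<subseteq> S \<and> S \<subseteq> I \<longrightarrow> absF (sum c S - s) < e))"

definition analyticF :: "('f::field \<Rightarrow> real) \<Rightarrow> nat \<Rightarrow> nat \<Rightarrow> ((nat \<Rightarrow> 'f) \<Rightarrow> (nat \<Rightarrow> 'f))
    \<Rightarrow> (nat \<Rightarrow> 'f) set \<Rightarrow> bool" where
  "analyticF absF n m f U \<longleftrightarrow> openF absF n U \<and> (\<forall>x\<in>U. f x \<in> Fn m) \<and>
     (\<forall>a\<in>U. \<exists>r>0. \<exists>c :: nat \<Rightarrow> (nat \<Rightarrow> nat) \<Rightarrow> 'f.
        \<forall>y\<in>Fn n. normF absF n (y - a) < r \<longrightarrow>
          y \<in> U \<and> (\<forall>j<m. has_sumF absF (\<lambda>\<alpha>. c j \<alpha> * monoF n \<alpha> (y - a)) (MI n) (f y j)))"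

text \<open>An atlas is a set of charts (U, n, \<phi>): \<phi> is a homeomorphism from the open set U of
  the (Hausdorff, second countable) space onto an open subset of F^n; the charts cover
  the space and all transition maps are analytic.\<close>
type_synonym ('z,'f) chart = "'z set \<times> nat \<times> ('z \<Rightarrow> nat \<Rightarrow> 'f)"

definition analytic_manifold :: "('f::field \<Rightarrow> real) \<Rightarrow> ('z::topological_space,'f) chart set \<Rightarrow> bool" where
  "analytic_manifold absF A \<longleftrightarrow>
     (\<forall>z. \<exists>(U,n,\<phi>)\<in>A. z \<in> U) \<and>
     (\<forall>(U,n,\<phi>)\<in>A. open U \<and> inj_on \<phi> U \<and> \<phi> ` U \<subseteq> Fn n \<and> openF absF n (\<phi> ` U) \<and>
        (\<forall>V. openF absF n V \<longrightarrow> open {z\<in>U. \<phi> z \<in> V}) \<and>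
        (\<forall>W. open W \<and> W \<subseteq> U \<longrightarrow> openF absF n (\<phi> ` W))) \<and>
     (\<forall>(U,n,\<phi>)\<in>A. \<forall>(V,m,\<psi>)\<in>A.
        analyticF absF n m (\<psi> \<circ> inv_into U \<phi>) (\<phi> ` (U \<inter> V)))"

definition analytic_morphism :: "('f::field \<Rightarrow> real) \<Rightarrow> ('a::topological_space,'f) chart set
    \<Rightarrow> ('b::topological_space,'f) chart set \<Rightarrow> ('a \<Rightarrow> 'b) \<Rightarrow> bool" where
  "analytic_morphism absF A1 A2 \<gamma> \<longleftrightarrow> continuous_on UNIV \<gamma> \<and>
     (\<forall>(U,n,\<phi>)\<in>A1. \<forall>(V,m,\<psi>)\<in>A2.
        analyticF absF n m (\<psi> \<circ> \<gamma> \<circ> inv_into U \<phi>) (\<phi> ` (U \<inter> \<gamma> -` V)))"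

text \<open>The Haar measure on F^n normalised by giving the closed unit ball measure 1
  (translation invariance + this normalisation determine it uniquely).\<close>
definition haarF :: "('f::field \<Rightarrow> real) \<Rightarrow> nat \<Rightarrow> (nat \<Rightarrow> 'f) measure" where
  "haarF absF n = (THE M. space M = Fn n \<and> sets M = sigma_sets (Fn n) {S. openF absF n S} \<and>
      emeasure M {x\<in>Fn n. normF absF n x \<le> 1} = 1 \<and>
      (\<forall>a\<in>Fn n. \<forall>B\<in>sets M. emeasure M ((\<lambda>x i. x i + a i) ` B) = emeasure M B))"

text \<open>A nowhere vanishing smooth measure: in every chart it is locally a positive
  locally constant (= smooth in the non-Archimedean sense) multiple of Haar measure.\<close>
definition smooth_nv_measure :: "('f::field \<Rightarrow> real) \<Rightarrow> ('z::topological_space,'f) chart set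
    \<Rightarrow> 'z measure \<Rightarrow> bool" where
  "smooth_nv_measure absF A \<mu> \<longleftrightarrow> sets \<mu> = sets borel \<and>
     (\<forall>(U,n,\<phi>)\<in>A. \<forall>a\<in>U. \<exists>W c. open W \<and> a \<in> W \<and> W \<subseteq> U \<and> (0::real) < c \<and>
        (\<forall>B\<in>sets borel. B \<subseteq> W \<longrightarrow>
           emeasure \<mu> B = ennreal c * emeasure (haarF absF n) (\<phi> ` B)))"

definition Cc_infty :: "('z::topological_space \<Rightarrow> real) \<Rightarrow> bool" where
  "Cc_infty f \<longleftrightarrow> (\<forall>x. \<exists>U. open U \<and> x \<in> U \<and> (\<forall>y\<in>U. f y = f x)) \<and>
     (\<exists>K. compact K \<and> (\<forall>x. x \<notin> K \<longrightarrow> f x = 0))"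

end

theory Submission
  imports Defs
begin


lemma nalf_abs_neg:
  assumes "nonarch_local_field absF" shows "absF (- x) = absF x"
proof -
  have m: "\<And>x y. absF (x * y) = absF x * absF y" and nn: "\<And>x. 0 \<le> absF x"
    and z: "\<And>x. absF x = 0 \<longleftrightarrow> x = 0"
    using assms unfolding nonarch_local_field_def by auto
  have "absF 1 = absF 1 * absF 1" using m[of 1 1] by simp
  moreover have "absF 1 \<noteq> 0" using z[of 1] by simp
  ultimately have one: "absF 1 = 1" by (metis mult_cancel_left1)
  have "absF (-1) * absF (-1) = 1" using m[of "-1" "-1"] one by simp
  hence "absF (-1) = 1" using nn[of "-1"]
    by (metis abs_of_nonneg abs_square_eq_1 power2_eq_square)
  thus ?thesis using m[of "-1" x] by simp
qed

lemma normF_nonneg: "0 \<le> normF absF n x"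
  unfolding normF_def by (simp add: Max_ge_iff)

lemma normF_ge: "i < n \<Longrightarrow> absF (x i) \<le> normF absF n x"
  unfolding normF_def by (simp add: Max_ge_iff)

lemma normF_le: "0 \<le> c \<Longrightarrow> (\<And>i. i < n \<Longrightarrow> absF (x i) \<le> c) \<Longrightarrow> normF absF n x \<le> c"
  unfolding normF_def by (auto simp add: Max_le_iff)

lemma normF_le_sum: assumes "\<And>x. 0 \<le> absF x"
  shows "normF absF n x \<le> (\<Sum>i<n. absF (x i))"
proof (rule normF_le)
  show "0 \<le> (\<Sum>i<n. absF (x i))" using assms by (simp add: sum_nonneg)
  fix i assume "i < n"
  thus "absF (x i) \<le> (\<Sum>i<n. absF (x i))"
    using member_le_sum[of i "{..<n}" "\<lambda>i. absF (x i)"] assms by auto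
qed

lemma normF_ultra:
  assumes "nonarch_local_field absF"
  shows "normF absF n (z - a) \<le> max (normF absF n (z - y)) (normF absF n (y - a))"
proof (rule normF_le)
  show "0 \<le> max (normF absF n (z - y)) (normF absF n (y - a))"
    using normF_nonneg by (metis max.coboundedI1)
  fix i assume i: "i < n"
  have "absF ((z i - y i) + (y i - a i)) \<le> max (absF (z i - y i)) (absF (y i - a i))"
    using assms unfolding nonarch_local_field_def by blast
  also have "\<dots> \<le> max (normF absF n (z - y)) (normF absF n (y - a))"
    using normF_ge[OF i, of absF "z - y"] normF_ge[OF i, of absF "y - a"] by auto
  finally show "absF ((z - a) i) \<le> max (normF absF n (z - y)) (normF absF n (y - a))"
    by simp
qed

lemma normF_sym:
  assumes "nonarch_local_field absF"
  shows "normF absF n (x - y) = normF absF n (y - x)"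
proof -
  have "\<And>i. absF ((x - y) i) = absF ((y - x) i)"
    using nalf_abs_neg[OF assms] by (metis fun_diff_def minus_diff_eq)
  hence "(\<lambda>i. absF ((x - y) i)) ` {..<n} = (\<lambda>i. absF ((y - x) i)) ` {..<n}"
    by (intro image_cong) auto
  thus ?thesis unfolding normF_def by metis
qed

lemma nalf_seq_subseq:
  fixes absF :: "'f::field \<Rightarrow> real" and s :: "nat \<Rightarrow> nat \<Rightarrow> 'f"
  assumes F: "nonarch_local_field absF"
    and s: "\<And>j. normF absF n (s j - a) \<le> t" and t1: "t \<le> 1"
  shows "\<exists>r l. strict_mono r \<and> l \<in> Fn n \<and> normF absF n (l - a) \<le> t \<and>
           (\<lambda>j. normF absF n (s (r j) - l)) \<longlonglongrightarrow> 0"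
proof -
  have nn: "\<And>x. 0 \<le> absF x" using F unfolding nonarch_local_field_def by auto
  have ultra: "\<And>x y. absF (x + y) \<le> max (absF x) (absF y)"
    using F unfolding nonarch_local_field_def by auto
  have comp: "\<And>u::nat\<Rightarrow>'f. (\<forall>k. absF (u k) \<le> 1) \<Longrightarrow>
        (\<exists>r l. strict_mono r \<and> absF l \<le> 1 \<and> (\<lambda>k. absF (u (r k) - l)) \<longlonglongrightarrow> 0)"
    using F unfolding nonarch_local_field_def by blast
  have claim: "m \<le> n \<longrightarrow> (\<exists>r c. strict_mono r \<and> (\<forall>i<m. (\<lambda>j. absF (s (r j) i - a i - c i)) \<longlonglongrightarrow> 0))" for m
  proof (induction m)
    case 0
    have "strict_mono (id::nat\<Rightarrow>nat)" by (simp add: strict_mono_def)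
    thus ?case by (intro impI exI[of _ id]) auto
  next
    case (Suc m)
    show ?case
    proof
      assume "Suc m \<le> n"
      hence True: "m < n" by simp
      then obtain r c where r: "strict_mono r"
        and c: "\<forall>i<m. (\<lambda>j. absF (s (r j) i - a i - c i)) \<longlonglongrightarrow> 0" using Suc by auto
      have "\<forall>k. absF (s (r k) m - a m) \<le> 1"
        using normF_ge[OF True, of absF "s (r _) - a"] s t1 by (metis fun_diff_def order_trans)
      then obtain r' l' where r': "strict_mono r'"
        and l': "(\<lambda>k. absF (s (r (r' k)) m - a m - l')) \<longlonglongrightarrow> 0"
        using comp[of "\<lambda>k. s (r k) m - a m"] by blast
      show "\<exists>r c. strict_mono r \<and> (\<forall>i<Suc m. (\<lambda>j. absF (s (r j) i - a i - c i)) \<longlonglongrightarrow> 0)"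
      proof (intro exI conjI allI impI)
        show "strict_mono (r \<circ> r')" using r r' by (rule strict_mono_o)
        fix i assume i: "i < Suc m"
        show "(\<lambda>j. absF (s ((r \<circ> r') j) i - a i - (c(m := l')) i)) \<longlonglongrightarrow> 0"
        proof (cases "i = m")
          case True thus ?thesis using l' by simp
        next
          case False
          hence "i < m" using i by simp
          hence "((\<lambda>j. absF (s (r j) i - a i - c i)) \<circ> r') \<longlonglongrightarrow> 0"
            using c LIMSEQ_subseq_LIMSEQ r' by blast
          thus ?thesis using False by (simp add: comp_def)
        qed
      qed
    qed
  qed
  then obtain r c where r: "strict_mono r"
    and c: "\<And>i. i < n \<Longrightarrow> (\<lambda>j. absF (s (r j) i - a i - c i)) \<longlonglongrightarrow> 0" by blast
  define l where "l = (\<lambda>i. if i < n then a i + c i else 0)"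
  have lF: "l \<in> Fn n" unfolding l_def Fn_def by simp
  have conv: "(\<lambda>j. normF absF n (s (r j) - l)) \<longlonglongrightarrow> 0"
  proof (rule tendsto_sandwich[of "\<lambda>_. 0" _ _ "\<lambda>j. \<Sum>i<n. absF (s (r j) i - a i - c i)"])
    show "\<forall>\<^sub>F j in sequentially. 0 \<le> normF absF n (s (r j) - l)" by (simp add: normF_nonneg)
    have "normF absF n (s (r j) - l) \<le> (\<Sum>i<n. absF (s (r j) i - a i - c i))" for j
    proof -
      have "normF absF n (s (r j) - l) \<le> (\<Sum>i<n. absF ((s (r j) - l) i))"
        by (rule normF_le_sum[OF nn])
      also have "\<dots> = (\<Sum>i<n. absF (s (r j) i - a i - c i))"
        by (intro sum.cong) (auto simp: l_def algebra_simps)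
      finally show ?thesis .
    qed
    thus "\<forall>\<^sub>F j in sequentially. normF absF n (s (r j) - l) \<le> (\<Sum>i<n. absF (s (r j) i - a i - c i))"
      by simp
    show "(\<lambda>_. 0) \<longlonglongrightarrow> (0::real)" by simp
    have "(\<lambda>j. \<Sum>i<n. absF (s (r j) i - a i - c i)) \<longlonglongrightarrow> (\<Sum>i<n. (0::real))"
      by (intro tendsto_sum) (use c in auto)
    thus "(\<lambda>j. \<Sum>i<n. absF (s (r j) i - a i - c i)) \<longlonglongrightarrow> 0" by simp
  qed
  have "normF absF n (l - a) \<le> t"
  proof (rule normF_le)
    show "0 \<le> t" using s[of 0] normF_nonneg by (metis order_trans)
    fix i assume i: "i < n"
    have neg: "absF (c i - x) = absF (x - c i)" for x
      using nalf_abs_neg[OF F, of "x - c i"] by simp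
    have "absF (c i) \<le> t + absF (s (r j) i - a i - c i)" for j
    proof -
      have "absF (c i) = absF ((c i - (s (r j) i - a i)) + (s (r j) i - a i))" by simp
      also have "\<dots> \<le> max (absF (c i - (s (r j) i - a i))) (absF (s (r j) i - a i))"
        by (rule ultra)
      also have "absF (s (r j) i - a i) \<le> t"
        using normF_ge[OF i, of absF "s (r j) - a"] s[of "r j"] by simp
      hence "max (absF (c i - (s (r j) i - a i))) (absF (s (r j) i - a i))
             \<le> t + absF (s (r j) i - a i - c i)"
        using neg[of "s (r j) i - a i"] nn[of "s (r j) i - a i - c i"] s[of 0] normF_nonneg[of absF n]
        by (smt (verit, ccfv_threshold) diff_diff_eq2)
      finally show ?thesis .
    qed
    moreover have "(\<lambda>j. t + absF (s (r j) i - a i - c i)) \<longlonglongrightarrow> t + 0"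
      by (intro tendsto_add tendsto_const c i)
    ultimately have "absF (c i) \<le> t + 0"
      using LIMSEQ_le_const by (metis (no_types, lifting))
    thus "absF ((l - a) i) \<le> t" using i by (simp add: l_def)
  qed
  thus ?thesis using r lF conv by blast
qed

lemma compact_open_nbhd:
  fixes absF :: "'f::field \<Rightarrow> real"
    and A :: "('a::{t2_space,second_countable_topology}, 'f) chart set" and z :: 'a
  assumes F: "nonarch_local_field absF" and M: "analytic_manifold absF A"
  shows "\<exists>W. open W \<and> compact W \<and> z \<in> W"
proof -
  have cov: "\<forall>z. \<exists>(U,n,\<phi>)\<in>A. z \<in> U"
    using M unfolding analytic_manifold_def by (elim conjE)
  have all: "\<forall>(U,n,\<phi>)\<in>A. open U \<and> inj_on \<phi> U \<and> \<phi> ` U \<subseteq> Fn n \<and> openF absF n (\<phi> ` U) \<and>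
        (\<forall>V. openF absF n V \<longrightarrow> open {z\<in>U. \<phi> z \<in> V}) \<and>
        (\<forall>W. open W \<and> W \<subseteq> U \<longrightarrow> openF absF n (\<phi> ` W))"
    using M unfolding analytic_manifold_def by (elim conjE)
  obtain U n \<phi> where UA: "(U,n,\<phi>) \<in> A" and zU: "z \<in> U"
    using cov[rule_format, of z] by auto
  have ch: "open U \<and> inj_on \<phi> U \<and> \<phi> ` U \<subseteq> Fn n \<and> openF absF n (\<phi> ` U) \<and>
        (\<forall>V. openF absF n V \<longrightarrow> open {z\<in>U. \<phi> z \<in> V}) \<and>
        (\<forall>W. open W \<and> W \<subseteq> U \<longrightarrow> openF absF n (\<phi> ` W))"
    using bspec[OF all UA] by simp
  hence inj: "inj_on \<phi> U" and img: "\<phi> ` U \<subseteq> Fn n" and oU: "openF absF n (\<phi> ` U)"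
    and pre: "\<And>V. openF absF n V \<Longrightarrow> open {z\<in>U. \<phi> z \<in> V}"
    and opm: "\<And>W. open W \<Longrightarrow> W \<subseteq> U \<Longrightarrow> openF absF n (\<phi> ` W)" by auto
  have abs0: "absF 0 = 0" using F unfolding nonarch_local_field_def by auto
  obtain r where r: "r > 0" and rb: "{y\<in>Fn n. normF absF n (y - \<phi> z) < r} \<subseteq> \<phi> ` U"
    using oU zU unfolding openF_def by blast
  define t where "t = min (r/2) 1"
  have t0: "0 < t" and tr: "t < r" and t1: "t \<le> 1" using r by (auto simp: t_def)
  define V where "V = {y\<in>Fn n. normF absF n (y - \<phi> z) \<le> t}"
  define W where "W = {x\<in>U. \<phi> x \<in> V}"
  have oV: "openF absF n V"
    unfolding openF_def
  proof (intro conjI ballI exI[of _ t])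
    show "V \<subseteq> Fn n" by (auto simp: V_def)
    fix y assume y: "y \<in> V"
    show "0 < t" by (rule t0)
    show "{w \<in> Fn n. normF absF n (w - y) < t} \<subseteq> V"
    proof
      fix w assume w: "w \<in> {w \<in> Fn n. normF absF n (w - y) < t}"
      have "normF absF n (w - \<phi> z) \<le> max (normF absF n (w - y)) (normF absF n (y - \<phi> z))"
        by (rule normF_ultra[OF F])
      also have "\<dots> \<le> t" using w y by (auto simp: V_def)
      finally show "w \<in> V" using w by (auto simp: V_def)
    qed
  qed
  have oW: "open W" unfolding W_def by (rule pre[OF oV])
  have zW: "z \<in> W"
  proof -
    have "normF absF n (\<phi> z - \<phi> z) \<le> t" using t0 abs0 by (intro normF_le) auto
    thus ?thesis using zU img by (auto simp: W_def V_def)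
  qed
  have "seq_compact W"
  proof (rule seq_compactI)
    fix f :: "nat \<Rightarrow> 'a" assume f: "\<forall>k. f k \<in> W"
    have "\<And>k. normF absF n (\<phi> (f k) - \<phi> z) \<le> t" using f by (auto simp: W_def V_def)
    then obtain rr l where rr: "strict_mono rr" and lF: "l \<in> Fn n"
      and lt: "normF absF n (l - \<phi> z) \<le> t"
      and conv: "(\<lambda>j. normF absF n (\<phi> (f (rr j)) - l)) \<longlonglongrightarrow> 0"
      using nalf_seq_subseq[OF F _ t1, of n "\<lambda>k. \<phi> (f k)" "\<phi> z"] by blast
    have "l \<in> \<phi> ` U" using rb lF lt tr by auto
    define p where "p = inv_into U \<phi> l"
    have pU: "p \<in> U" and pl: "\<phi> p = l" using \<open>l \<in> \<phi> ` U\<close>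
      by (auto simp: p_def inv_into_into f_inv_into_f)
    have pW: "p \<in> W" using pU pl lF lt by (auto simp: W_def V_def)
    have "(f \<circ> rr) \<longlonglongrightarrow> p"
    proof (rule topological_tendstoI)
      fix Q assume oO: "open Q" and pO: "p \<in> Q"
      have "openF absF n (\<phi> ` (Q \<inter> U))" using oO ch by (intro opm) auto
      moreover have "l \<in> \<phi> ` (Q \<inter> U)" using pO pU pl by auto
      ultimately obtain e where e: "e > 0"
        and eb: "{y\<in>Fn n. normF absF n (y - l) < e} \<subseteq> \<phi> ` (Q \<inter> U)"
        unfolding openF_def by blast
      have ev: "\<forall>\<^sub>F j in sequentially. normF absF n (\<phi> (f (rr j)) - l) < e"
        using order_tendstoD(2)[OF conv e] .
      show "\<forall>\<^sub>F j in sequentially. (f \<circ> rr) j \<in> Q"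
      proof (rule eventually_mono[OF ev])
        fix j assume j: "normF absF n (\<phi> (f (rr j)) - l) < e"
        have fU: "f (rr j) \<in> U" using f by (auto simp: W_def)
        hence "\<phi> (f (rr j)) \<in> Fn n" using img by auto
        hence "\<phi> (f (rr j)) \<in> \<phi> ` (Q \<inter> U)" using eb j by auto
        then obtain o' where o': "o' \<in> Q \<inter> U" "\<phi> (f (rr j)) = \<phi> o'" by auto
        hence "f (rr j) = o'" using inj fU by (auto dest: inj_onD)
        thus "(f \<circ> rr) j \<in> Q" using o' by simp
      qed
    qed
    thus "\<exists>l\<in>W. \<exists>r::nat\<Rightarrow>nat. strict_mono r \<and> (f \<circ> r) \<longlonglongrightarrow> l" using pW rr by blast
  qed
  hence "compact W" by (simp add: seq_compact_eq_compact)
  thus ?thesis using oW zW by blast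
qed


lemma compact_in_compact_open:
  fixes K :: "'a::topological_space set"
  assumes K: "compact K" and nb: "\<And>z::'a. \<exists>W::'a set. open W \<and> compact W \<and> z \<in> W"
  shows "\<exists>C. open C \<and> compact C \<and> K \<subseteq> C"
proof -
  have cover: "K \<subseteq> \<Union>{W. open W \<and> compact W}"
  proof
    fix z assume "z \<in> K"
    obtain W where "open W" "compact W" "z \<in> W" using nb[of z] by blast
    thus "z \<in> \<Union>{W. open W \<and> compact W}" by blast
  qed
  obtain T where T: "T \<subseteq> {W. open W \<and> compact W}" "finite T" "K \<subseteq> \<Union>T"
    by (rule compactE[OF K cover]) auto
  have "open (\<Union>T)" using T(1) by auto
  moreover have "compact (\<Union>T)" using T(1,2) by (intro compact_Union) auto
  ultimately show ?thesis using T(3) by blast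
qed

lemma young_simple:
  fixes h g e :: real
  assumes h: "0 \<le> h" and g: "0 \<le> g" and e: "0 < e"
  shows "h * g \<le> g powr (1 + e) + h powr (1 + 1/e)"
proof (cases "g = 0")
  case True thus ?thesis by simp
next
  case gnz: False
  show ?thesis
proof (cases "h \<le> g powr e")
  case True
  have "h * g \<le> g powr e * g" using True g by (rule mult_right_mono)
  also have "\<dots> = g powr (1 + e)"
    using g by (cases "g = 0") (auto simp: powr_add)
  finally have "h * g \<le> g powr (1 + e)" .
  moreover have "0 \<le> h powr (1 + 1/e)" by simp
  ultimately show ?thesis by linarith
next
  case False
  have gpos: "g > 0" using g gnz by simp
  have hpos: "h > 0" using False gpos powr_gt_zero[of g e] by linarith
  have "g = (g powr e) powr (1/e)" using e gpos by (simp add: powr_powr)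
  also have "\<dots> \<le> h powr (1/e)" using False e gpos by (intro powr_mono2) auto
  finally have "h * g \<le> h * h powr (1/e)" using h by (rule mult_left_mono)
  also have "\<dots> = h powr (1 + 1/e)" using hpos by (simp add: powr_add)
  finally have "h * g \<le> h powr (1 + 1/e)" .
  moreover have "0 \<le> g powr (1 + e)" by simp
  ultimately show ?thesis by linarith
qed
qed


theorem lemma12p2:
  fixes absF :: "'f::field \<Rightarrow> real"
    and A1 :: "('a::{t2_space,second_countable_topology}, 'f) chart set"
    and A2 :: "('b::{t2_space,second_countable_topology}, 'f) chart set"
    and \<gamma> :: "'a \<Rightarrow> 'b"
    and \<mu>1 :: "'a measure" and \<mu>2 :: "'b measure"
  assumes "nonarch_local_field absF"
    and "analytic_manifold absF A1" and "analytic_manifold absF A2"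
    and "analytic_morphism absF A1 A2 \<gamma>"
    and "smooth_nv_measure absF A1 \<mu>1" and "smooth_nv_measure absF A2 \<mu>2"
    and "\<And>f. Cc_infty f \<Longrightarrow> (\<forall>x. 0 \<le> f x) \<Longrightarrow>
           (\<exists>h. h \<in> borel_measurable \<mu>2 \<and> (\<forall>y. 0 \<le> h y) \<and>
                distr (density \<mu>1 (\<lambda>x. ennreal (f x))) \<mu>2 \<gamma> = density \<mu>2 (\<lambda>y. ennreal (h y)) \<and>
                (\<forall>t::real. 1 \<le> t \<longrightarrow> integrable \<mu>2 (\<lambda>y. \<bar>h y\<bar> powr t)))"
  shows "\<forall>\<epsilon>::real. \<epsilon> > 0 \<longrightarrow> (\<forall>g. g \<in> borel_measurable \<mu>2 \<and> (\<forall>y. 0 \<le> g y) \<and>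
            integrable \<mu>2 (\<lambda>y. \<bar>g y\<bar> powr (1 + \<epsilon>)) \<longrightarrow>
            (\<forall>K. compact K \<longrightarrow> set_integrable \<mu>1 K (\<lambda>x. g (\<gamma> x))))"
proof (intro allI impI)
  fix \<epsilon> :: real and g :: "'b \<Rightarrow> real" and K :: "'a set"
  assume e: "\<epsilon> > 0"
    and gass: "g \<in> borel_measurable \<mu>2 \<and> (\<forall>y. 0 \<le> g y) \<and> integrable \<mu>2 (\<lambda>y. \<bar>g y\<bar> powr (1 + \<epsilon>))"
    and K: "compact K"
  have gm: "g \<in> borel_measurable \<mu>2" and g0: "\<And>y. 0 \<le> g y"
    and gi: "integrable \<mu>2 (\<lambda>y. \<bar>g y\<bar> powr (1 + \<epsilon>))" using gass by auto
  have s1: "sets \<mu>1 = sets borel" using assms(5) unfolding smooth_nv_measure_def by blast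
  have s2: "sets \<mu>2 = sets borel" using assms(6) unfolding smooth_nv_measure_def by blast
  have cont: "continuous_on UNIV \<gamma>" using assms(4) unfolding analytic_morphism_def by blast
  have \<gamma>m: "\<gamma> \<in> measurable \<mu>1 \<mu>2"
    using measurable_cong_sets[OF s1 s2] borel_measurable_continuous_onI[OF cont] by simp
  obtain C where oC: "open C" and cC: "compact C" and KC: "K \<subseteq> C"
    using compact_in_compact_open[OF K compact_open_nbhd[OF assms(1) assms(2)]] by blast
  define f where "f = (\<lambda>x. indicator C x :: real)"
  have "open (- C)" using cC by (simp add: compact_imp_closed open_Compl)
  have loc: "\<exists>U. open U \<and> x \<in> U \<and> (\<forall>y\<in>U. f y = f x)" for x
  proof (cases "x \<in> C")
    case True thus ?thesis using oC by (intro exI[of _ C]) (auto simp: f_def)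
  next
    case False thus ?thesis using \<open>open (- C)\<close> by (intro exI[of _ "- C"]) (auto simp: f_def)
  qed
  have Cc: "Cc_infty f"
    unfolding Cc_infty_def using loc cC by (auto simp: f_def)
  have f0: "\<forall>x. 0 \<le> f x" by (simp add: f_def)
  obtain h where hm: "h \<in> borel_measurable \<mu>2" and h0: "\<forall>y. 0 \<le> h y"
    and hd: "distr (density \<mu>1 (\<lambda>x. ennreal (f x))) \<mu>2 \<gamma> = density \<mu>2 (\<lambda>y. ennreal (h y))"
    and hi: "\<forall>t::real. 1 \<le> t \<longrightarrow> integrable \<mu>2 (\<lambda>y. \<bar>h y\<bar> powr t)"
    using assms(7)[OF Cc f0] by blast
  have Cm: "C \<in> sets \<mu>1" using oC s1 by simp
  have fm: "(\<lambda>x. ennreal (f x)) \<in> borel_measurable \<mu>1" unfolding f_def using Cm by simp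
  have gm': "(\<lambda>y. ennreal (g y)) \<in> borel_measurable \<mu>2" using gm by simp
  have \<gamma>m': "\<gamma> \<in> measurable (density \<mu>1 (\<lambda>x. ennreal (f x))) \<mu>2"
    using \<gamma>m by simp
  have "(\<integral>\<^sup>+x. ennreal (f x) * ennreal (g (\<gamma> x)) \<partial>\<mu>1)
      = (\<integral>\<^sup>+x. ennreal (g (\<gamma> x)) \<partial>density \<mu>1 (\<lambda>x. ennreal (f x)))"
    using fm gm' \<gamma>m by (subst nn_integral_density) auto
  also have "\<dots> = (\<integral>\<^sup>+y. ennreal (g y) \<partial>distr (density \<mu>1 (\<lambda>x. ennreal (f x))) \<mu>2 \<gamma>)"
    using gm' \<gamma>m' by (subst nn_integral_distr) auto
  also have "\<dots> = (\<integral>\<^sup>+y. ennreal (h y) * ennreal (g y) \<partial>\<mu>2)"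
    unfolding hd using hm gm' by (subst nn_integral_density) auto
  also have "\<dots> \<le> (\<integral>\<^sup>+y. ennreal (norm (\<bar>g y\<bar> powr (1 + \<epsilon>) + \<bar>h y\<bar> powr (1 + 1/\<epsilon>))) \<partial>\<mu>2)"
  proof (rule nn_integral_mono)
    fix y
    have "h y * g y \<le> g y powr (1 + \<epsilon>) + h y powr (1 + 1/\<epsilon>)"
      using young_simple[OF _ g0 e, of "h y"] h0 by simp
    thus "ennreal (h y) * ennreal (g y) \<le> ennreal (norm (\<bar>g y\<bar> powr (1 + \<epsilon>) + \<bar>h y\<bar> powr (1 + 1/\<epsilon>)))"
    proof -
      have e1: "ennreal (h y) * ennreal (g y) = ennreal (h y * g y)"
        using h0 g0[of y] by (simp add: ennreal_mult)
      have e2: "norm (\<bar>g y\<bar> powr (1 + \<epsilon>) + \<bar>h y\<bar> powr (1 + 1/\<epsilon>))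
          = g y powr (1 + \<epsilon>) + h y powr (1 + 1/\<epsilon>)"
        using h0 g0[of y] by simp
      show ?thesis unfolding e1 e2 by (rule ennreal_leI) fact
    qed
  qed
  also have "\<dots> < \<infinity>"
  proof -
    have "1 \<le> 1 + 1/\<epsilon>" using e by simp
    have "integrable \<mu>2 (\<lambda>y. \<bar>g y\<bar> powr (1 + \<epsilon>) + \<bar>h y\<bar> powr (1 + 1/\<epsilon>))"
      by (rule Bochner_Integration.integrable_add[OF gi hi[rule_format, OF \<open>1 \<le> 1 + 1/\<epsilon>\<close>]])
    thus ?thesis by (simp only: integrable_iff_bounded)
  qed
  finally have fin: "(\<integral>\<^sup>+x. ennreal (f x) * ennreal (g (\<gamma> x)) \<partial>\<mu>1) < \<infinity>" .
  have Km: "K \<in> sets \<mu>1" using K s1 by (simp add: compact_imp_closed)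
  have g\<gamma>m: "(\<lambda>x. g (\<gamma> x)) \<in> borel_measurable \<mu>1"
    using measurable_compose[OF \<gamma>m gm] by simp
  show "set_integrable \<mu>1 K (\<lambda>x. g (\<gamma> x))"
    unfolding set_integrable_def
  proof (rule integrableI_bounded)
    show "(\<lambda>x. indicator K x *\<^sub>R g (\<gamma> x)) \<in> borel_measurable \<mu>1"
      using Km g\<gamma>m by simp
    have "(\<integral>\<^sup>+x. ennreal (norm (indicator K x *\<^sub>R g (\<gamma> x))) \<partial>\<mu>1)
        \<le> (\<integral>\<^sup>+x. ennreal (f x) * ennreal (g (\<gamma> x)) \<partial>\<mu>1)"
    proof (rule nn_integral_mono)
      fix x
      show "ennreal (norm (indicator K x *\<^sub>R g (\<gamma> x))) \<le> ennreal (f x) * ennreal (g (\<gamma> x))"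
        using KC g0[of "\<gamma> x"] by (cases "x \<in> K") (auto simp: f_def indicator_def)
    qed
    thus "(\<integral>\<^sup>+x. ennreal (norm (indicator K x *\<^sub>R g (\<gamma> x))) \<partial>\<mu>1) < \<infinity>"
      using fin by (meson order.strict_trans1)
  qed
qed

end
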